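(* Let $n$ be a nonnegative integer and let $q$, $a$, $z$ be indeterminates (equivalently, generic complex numbers such that no denominator below vanishes), with $a^{1/2}$ a fixed square root of $a$. Then the following two identities hold: \[ \frac{(q^{z+2};q^2)_n\,(a^{-1}q^{2-z};q^2)_n}{(q;q^2)_n\,(a^{-1}q^3;q^2)_n} =\sum_{k=0}^n \frac{(q^{-n};q)_k\,(-q^{-n};q)_k\,(q^{z+1};q)_k\,(a^{-1}q^{1-z};q)_k} {(q;q)_k\,(q^{-2n};q)_k\,(a^{-1/2}q^{3/2};q)_k\,(-a^{-1/2}q^{3/2};q)_k}\,q^k, \] and \[ \frac{(q^{z+2};q^2)_n\,(aq^{z-2n};q^2)_n}{(q^{z+1};q)_n\,(aq^{z-n};q)_n} =\sum_{k=0}^n \frac{(q^{-n};q)_k\,(q^{n+1};q)_k\,(a^{1/2}q^{-n-1/2};q)_k\,(-a^{1/2}q^{-n-1/2};q)_k} {(q;q)_k\,(-q;q)_k\,(q^{-z-n};q)_k\,(aq^{z-n};q)_k}\,q^k. \]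
   Context: For a variable $u$, a base $p$ and a nonnegative integer $n$, the shifted factorial is $(u;p)_0=1$ and $(u;p)_n=(1-u)(1-up)\cdots(1-up^{n-1})$; it is used here with bases $p=q$ and $p=q^2$. Powers such as $q^{z}$ and $q^{1/2}$ are understood formally (i.e., $q^{z}$ and $q^{1/2}$ are treated as variables). *)

theory Defs
  imports Complex_Main
begin

definition qpoch :: "complex \<Rightarrow> complex \<Rightarrow> nat \<Rightarrow> complex" where
  "qpoch u p n = (\<Prod>i<n. 1 - u * p ^ i)"

end

theory Submission imports Defs begin

lemma qpoch_0[simp]: "qpoch u p 0 = 1" by (simp add: qpoch_def)
lemma qpoch_Suc: "qpoch u p (Suc k) = qpoch u p k * (1 - u*p^k)"
  by (simp add: qpoch_def)
lemma qpoch_Suc': "qpoch u p (Suc k) = (1 - u) * qpoch (u*p) p k"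
  unfolding qpoch_def by (subst prod.lessThan_Suc_shift) (simp add: mult.assoc power_Suc)
lemma qpoch_shift: "qpoch u p k * (1 - u*p^k) = (1 - u) * qpoch (u*p) p k"
  using qpoch_Suc[of u p k] qpoch_Suc'[of u p k] by simp
lemma qpoch_nz: "(\<And>i. i < k \<Longrightarrow> 1 - u*p^i \<noteq> 0) \<Longrightarrow> qpoch u p k \<noteq> 0"
  unfolding qpoch_def by (simp add: prod_zero_iff)
lemma qpoch_nz_factor: "qpoch u p n \<noteq> 0 \<Longrightarrow> i < n \<Longrightarrow> 1 - u*p^i \<noteq> 0"
  unfolding qpoch_def by (auto simp: prod_zero_iff)

lemma rearr: "((n1::complex)*a1)*(n2*a2)*(n3*a3)*(n4*a4) / ((d1*b1)*(d2*b2)*(d3*b3)*(d4*b4)) * (q*y)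
  = n1*n2*n3*n4/(d1*d2*d3*d4)*y * (a1*a2*a3*a4*q/(b1*b2*b3*b4))"
  by (simp add: divide_inverse inverse_mult_distrib mult_ac)

lemma wz_telescope:
  fixes F1 F0 G :: "nat \<Rightarrow> complex"
  assumes "\<And>k. k \<le> Suc m \<Longrightarrow> F1 k - c * F0 k = G (Suc k) - G k"
    and "G 0 = 0" "G (Suc (Suc m)) = 0" "F0 (Suc m) = 0"
  shows "(\<Sum>k\<le>Suc m. F1 k) = c * (\<Sum>k\<le>m. F0 k)"
proof -
  have "(\<Sum>k\<le>Suc m. F1 k - c * F0 k) = (\<Sum>k<Suc (Suc m). G (Suc k) - G k)"
    using assms(1) by (simp add: lessThan_Suc_atMost[symmetric])
  also have "\<dots> = 0" by (subst sum_lessThan_telescope) (simp add: assms)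
  finally have "(\<Sum>k\<le>Suc m. F1 k - c * F0 k) = 0" .
  moreover have "(\<Sum>k\<le>Suc m. F1 k - c * F0 k) = (\<Sum>k\<le>Suc m. F1 k) - c * (\<Sum>k\<le>Suc m. F0 k)"
    by (simp only: sum_subtractf sum_distrib_left)
  ultimately have "(\<Sum>k\<le>Suc m. F1 k) = c * (\<Sum>k\<le>Suc m. F0 k)" by simp
  also have "(\<Sum>k\<le>Suc m. F0 k) = (\<Sum>k\<le>m. F0 k)" using assms(4) by simp
  finally show ?thesis .
qed

definition S1 :: "complex \<Rightarrow> complex \<Rightarrow> complex \<Rightarrow> complex \<Rightarrow> complex \<Rightarrow> nat \<Rightarrow> complex" where
  "S1 q a w e x k = qpoch (inverse x) q k * qpoch (- inverse x) q k * qpoch (w*q) q k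
     * qpoch (inverse a * q * inverse w) q k
     / (qpoch q q k * qpoch (inverse (x^2)) q k * qpoch e q k * qpoch (- e) q k) * q^k"

lemma E1_alg:
  fixes q ix y V A3 A4 b1 b2 b3 b4 :: complex
  assumes "b1\<noteq>0" "b2\<noteq>0" "b3\<noteq>0" "b4\<noteq>0" "V = ix^2"
  shows "(1 - ix*y)*(1 - - ix*y)*A3*A4*q/(b1*b2*b3*b4) = q*A3*A4/(b1*b3*b4) * ((1 - V*y^2)/b2)"
  using assms by (simp add: field_simps power2_eq_square)

lemma E1:
  assumes "x \<noteq> 0" "1 - q*q^j \<noteq> 0" "1 - inverse(x^2)*q^j \<noteq> 0" "1 - e*q^j \<noteq> 0" "1 - (-e)*q^j \<noteq> 0"
  shows "S1 q a w e x (Suc j) = S1 q a w e x j *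
    (q*(1-w*q*q^j)*(1-inverse a*q*inverse w*q^j)/((1-q*q^j)*(1-e*q^j)*(1-(-e)*q^j))
      * ((1 - inverse(x^2)*(q^j)^2)/(1 - inverse(x^2)*q^j)))"
  unfolding S1_def qpoch_Suc power_Suc rearr
  using assms by (subst E1_alg) (auto simp: power_inverse)

lemma S1_top:
  assumes "x = q^m" "q \<noteq> 0"
  shows "S1 q a w e x (Suc m) = 0"
  using assms unfolding S1_def by (simp add: qpoch_Suc)

lemma E2_core:
  fixes q y V W A3 A4 b1 b3 b4 g2 g3 dl d4 :: complex
  assumes nz: "q\<noteq>0" "b1\<noteq>0" "b3\<noteq>0" "b4\<noteq>0" "g2\<noteq>0" "g3\<noteq>0" "dl\<noteq>0" "d4\<noteq>0"
    and dd: "g2 = 1-W" "g3 = 1-W*q" "dl = 1-W*q*y" "d4 = q - V" and V: "V = W*q^2"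
  shows "(1-W)*A3*A4*q/(b1*(g2*g3/dl)*b3*b4) = q*A3*A4/(b1*b3*b4) * ((q - V*y)/d4)"
  using nz
  apply (simp add: field_simps)
  apply (unfold dd)
  apply (thin_tac "_ \<noteq> _")+
  using V
  apply algebra
  done

lemma E2_alg:
  fixes q ixq y V W A3 A4 b1 b3 b4 :: complex
  assumes "q\<noteq>0" "b1\<noteq>0" "b3\<noteq>0" "b4\<noteq>0" "1-W\<noteq>0" "1-W*q\<noteq>0" "1-W*q*y\<noteq>0" "W = ixq^2" "V = W*q^2"
  shows "(1 - ixq)*(1 - - ixq)*A3*A4*q/(b1*((1-W)*(1-W*q)/(1-W*q*y))*b3*b4) = q*A3*A4/(b1*b3*b4) * ((q - V*y)/(q - V))"
proof -
  have "q - V = q*(1-W*q)" using assms by (simp add: algebra_simps power2_eq_square)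
  hence "q - V \<noteq> 0" using assms by simp
  have e: "(1 - ixq)*(1 - - ixq) = 1 - W" using assms by (simp add: algebra_simps power2_eq_square)
  show ?thesis unfolding e
    by (rule E2_core[OF assms(1-7) \<open>q - V \<noteq> 0\<close> refl refl refl refl assms(9)])
qed

lemma E2:
  assumes "x \<noteq> 0" "q \<noteq> 0" "1 - q*q^j \<noteq> 0" "1 - e*q^j \<noteq> 0" "1 - (-e)*q^j \<noteq> 0"
    "1 - inverse((x*q)^2) \<noteq> 0" "1 - inverse((x*q)^2)*q \<noteq> 0" "1 - inverse((x*q)^2)*q*q^j \<noteq> 0"
  shows "S1 q a w e (x*q) (Suc j) = S1 q a w e x j *
    (q*(1-w*q*q^j)*(1-inverse a*q*inverse w*q^j)/((1-q*q^j)*(1-e*q^j)*(1-(-e)*q^j))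
      * ((q - inverse(x^2)*q^j)/(q - inverse(x^2))))"
proof -
  let ?W = "inverse((x*q)^2)"
  have r1: "qpoch (inverse (x*q)) q (Suc j) = qpoch (inverse x) q j * (1 - inverse(x*q))"
    unfolding qpoch_Suc' using assms by (simp add: field_simps)
  have r2: "qpoch (- inverse (x*q)) q (Suc j) = qpoch (- inverse x) q j * (1 - - inverse(x*q))"
    unfolding qpoch_Suc' using assms by (simp add: field_simps)
  have WV: "?W*q*q = inverse (x^2)" using assms by (simp add: field_simps power2_eq_square)
  have r5: "qpoch ?W q (Suc j) = qpoch (inverse (x^2)) q j * ((1-?W)*(1-?W*q)/(1-?W*q*q^j))"
  proof -
    have "qpoch (?W*q) q j * (1 - ?W*q*q^j) = (1 - ?W*q) * qpoch (inverse (x^2)) q j"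
      using qpoch_shift[of "?W*q" q j] WV by simp
    hence "qpoch (?W*q) q j = (1 - ?W*q) * qpoch (inverse (x^2)) q j / (1 - ?W*q*q^j)"
      using assms(8) by (simp add: field_simps)
    thus ?thesis unfolding qpoch_Suc' by (simp add: field_simps)
  qed
  show ?thesis
    unfolding S1_def unfolding r1 r2 r5 unfolding qpoch_Suc power_Suc rearr
    using assms by (subst E2_alg) (auto simp: power_inverse power_mult_distrib)
qed

lemma R1gen:
  fixes q V y b w d1 d2 d3 d4 :: complex
  assumes nz: "q\<noteq>0" "V\<noteq>0" "y\<noteq>0" "b\<noteq>0" "w\<noteq>0"
    and d: "d1 \<noteq> 0" "d2 \<noteq> 0" "d3 \<noteq> 0" "d4 \<noteq> 0"
    and dd: "d1 = V - q" "d2 = V - q^3*b" "d3 = 1 - V*y" "d4 = q - V"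
  shows "(q-V*y)/d4 - ((V-w*q^2)*(w*V-q^2*b)/(w*(d1*d2))) * ((1-V*y^2)/d3)
   = ((1-V*y^2)/d3) * (-(q^2*V*(1-w*(q*q*y))*(w-b*(q*q*y)))/(w*(d1*d2)*(q*q*y)))
     - (-(q^2*V*(1-q*y)*(1-q^3*b*y^2))/((d1*d2)*(q^2*y)))"
  using nz d
  apply (simp add: field_simps)
  apply (unfold dd)
  apply (thin_tac "_ \<noteq> _")+
  apply algebra
  done

lemma R1zero:
  fixes q V b w d1 d2 :: complex
  assumes nz: "q\<noteq>0" "V\<noteq>0" "b\<noteq>0" "w\<noteq>0"
    and d: "d1 \<noteq> 0" "d2 \<noteq> 0"
    and dd: "d1 = V - q" "d2 = V - q^3*b"
  shows "1 - (V-w*q^2)*(w*V-q^2*b)/(w*(d1*d2)) = -(q^2*V*(1-w*q)*(w-b*q))/(w*(d1*d2)*q)"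
  using nz d
  apply (simp add: field_simps)
  apply (unfold dd)
  apply (thin_tac "_ \<noteq> _")+
  apply algebra
  done

lemma R1top:
  fixes q V x b d1 d2 d4 :: complex
  assumes nz: "q\<noteq>0" "x\<noteq>0" "b\<noteq>0"
    and d: "d1 \<noteq> 0" "d2 \<noteq> 0" "d4 \<noteq> 0"
    and dd: "d1 = V - q" "d2 = V - q^3*b" "d4 = q - V" and V: "V*x^2 = 1"
  shows "(q-V*x)/d4 = - (-(q^2*V*(1-q*x)*(1-q^3*b*x^2))/((d1*d2)*(q^2*x)))"
  using nz d
  apply (simp add: field_simps)
  apply (unfold dd)
  apply (thin_tac "_ \<noteq> _")+
  using V
  apply algebra
  done

lemma R2gen:
  fixes q x y a w e1 e2 f1 f2 h1 :: complex
  assumes nz: "q\<noteq>0" "x\<noteq>0" "y\<noteq>0" "a\<noteq>0" "w\<noteq>0"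
    and d: "e1 \<noteq> 0" "e2 \<noteq> 0" "f1 \<noteq> 0" "f2 \<noteq> 0" "h1 \<noteq> 0"
    and dd: "e1 = w*x-y" "e2 = x-a*w*y" "f1 = w*x*q-1" "f2 = x*q-a*w" "h1 = 1-w*q*x"
  shows "-((1-x*q^2*y)*(x^2*q^3-a)*w)/(x*q^2*(f1*f2))
     - ((1-w*q^2*x^2)*(x^2*q^2-a*w)/(x*q*(h1*f2))) * (w*(x-y)*(x^2*q-a*y^2)/(x*q*(e1*e2)))
   = (w*(x-y)*(x^2*q-a*y^2)/(x*q*(e1*e2))) * (-(w*(1-x*(q*q*y))*(x^3*q^4-a*(q*q*y)))/(x*q*(h1*f2)*(q*q*y)))
     - (-(w*(x^3*q^3-a*y)*(1-q^2*y^2))/(x*q^2*(h1*f2)*y))"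
  using nz d
  apply (simp add: field_simps)
  apply (unfold dd)
  apply (thin_tac "_ \<noteq> _")+
  apply algebra
  done

lemma R2zero:
  fixes q x a w f2 h1 :: complex
  assumes nz: "q\<noteq>0" "x\<noteq>0" "a\<noteq>0" "w\<noteq>0"
    and d: "f2 \<noteq> 0" "h1 \<noteq> 0"
    and dd: "f2 = x*q-a*w" "h1 = 1-w*q*x"
  shows "1 - (1-w*q^2*x^2)*(x^2*q^2-a*w)/(x*q*(h1*f2)) = -(w*(1-x*q)*(x^3*q^4-a*q))/(x*q*(h1*f2)*q)"
  using nz d
  apply (simp add: field_simps)
  apply (unfold dd)
  apply (thin_tac "_ \<noteq> _")+
  apply algebra
  done

lemma R2top:
  fixes q x a w f1 f2 h1 :: complex
  assumes nz: "q\<noteq>0" "x\<noteq>0" "a\<noteq>0" "w\<noteq>0"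
    and d: "f1 \<noteq> 0" "f2 \<noteq> 0" "h1 \<noteq> 0"
    and dd: "f1 = w*x*q-1" "f2 = x*q-a*w" "h1 = 1-w*q*x"
  shows "-((1-x*q^2*x)*(x^2*q^3-a)*w)/(x*q^2*(f1*f2)) = - (-(w*(x^3*q^3-a*x)*(1-q^2*x^2))/(x*q^2*(h1*f2)*x))"
  using nz d
  apply (simp add: field_simps)
  apply (unfold dd)
  apply (thin_tac "_ \<noteq> _")+
  apply algebra
  done


lemma E3_core:
  fixes q V y b w e d1 d2 b1 b3 b4 :: complex
  assumes nz: "q\<noteq>0" "y\<noteq>0" "w\<noteq>0" "d1\<noteq>0" "d2\<noteq>0" "b1\<noteq>0" "b3\<noteq>0" "b4\<noteq>0"
    and dd: "d1 = V-q" "d2 = V-q^3*b" "b1 = 1-q*y" "b3 = 1-e*y" "b4 = 1-(-e)*y" and ee: "e^2 = q^3*b"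
  shows "-(q^2*V*(1-w*(q*y))*(w-b*(q*y)))/(w*(d1*d2)*(q*y))
    = q*(1-w*q*y)*(1-b*q*inverse w*y)/(b1*b3*b4) * (-(q^2*V*(1-q*y)*(1-q^3*b*y^2))/((d1*d2)*(q^2*y)))"
  using nz
  apply (simp add: field_simps)
  apply (unfold dd)
  apply (thin_tac "_ \<noteq> _")+
  using ee
  apply algebra
  done

lemma step1:
  fixes q a w e x :: complex and m :: nat
  assumes x: "x = q^m" and nz: "q \<noteq> 0" "a \<noteq> 0" "w \<noteq> 0"
    and ee: "e^2 = q^3 * inverse a"
    and h1: "\<And>j. j \<le> m \<Longrightarrow> 1 - q*q^j \<noteq> 0"
    and h2: "\<And>j. j \<le> m \<Longrightarrow> 1 - e*q^j \<noteq> 0" and h3: "\<And>j. j \<le> m \<Longrightarrow> 1 - (-e)*q^j \<noteq> 0"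
    and h4: "\<And>j. j < m \<Longrightarrow> 1 - inverse(x^2)*q^j \<noteq> 0"
    and h5: "inverse(x^2) - q \<noteq> 0" "inverse(x^2) - q^3*inverse a \<noteq> 0"
    and h6: "1 - inverse((x*q)^2) \<noteq> 0"
    and h7: "\<And>j. j \<le> m \<Longrightarrow> 1 - inverse((x*q)^2)*q*q^j \<noteq> 0"
  shows "(\<Sum>k\<le>Suc m. S1 q a w e (x*q) k) =
     (inverse(x^2)-w*q^2)*(w*inverse(x^2)-q^2*inverse a)/(w*((inverse(x^2)-q)*(inverse(x^2)-q^3*inverse a)))
     * (\<Sum>k\<le>m. S1 q a w e x k)"
proof -
  define V where "V = inverse (x^2)"
  define c where "c = (V-w*q^2)*(w*V-q^2*inverse a)/(w*((V-q)*(V-q^3*inverse a)))"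
  define P where "P z = -(q^2*V*(1-w*z)*(w-inverse a*z))/(w*((V-q)*(V-q^3*inverse a))*z)" for z
  define G where "G k = (if k = 0 then 0 else S1 q a w e x (k-1) * P (q^k))" for k
  have xnz: "x \<noteq> 0" using x nz by simp
  have Vnz: "V \<noteq> 0" using xnz by (simp add: V_def)
  have d1: "V - q \<noteq> 0" and d2: "V - q^3*inverse a \<noteq> 0" using h5 by (simp_all add: V_def)
  have d4: "q - V \<noteq> 0"
  proof -
    have "q - V = q * (1 - inverse((x*q)^2)*q*q^0)" using nz xnz
      by (simp add: V_def field_simps power2_eq_square)
    thus ?thesis using h7[of 0] nz by simp
  qed
  have top: "S1 q a w e x (Suc m) = 0" by (rule S1_top[OF x nz(1)])
  have "(\<Sum>k\<le>Suc m. S1 q a w e (x*q) k) = c * (\<Sum>k\<le>m. S1 q a w e x k)"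
  proof (rule wz_telescope[where G = G])
    show "G 0 = 0" by (simp add: G_def)
    show "G (Suc (Suc m)) = 0" by (simp add: G_def top)
    show "S1 q a w e x (Suc m) = 0" by (rule top)
    fix k assume k: "k \<le> Suc m"
    show "S1 q a w e (x*q) k - c * S1 q a w e x k = G (Suc k) - G k"
    proof (cases k)
      case 0
      have "1 - c = P q"
        unfolding c_def P_def
        using R1zero[OF nz(1) Vnz _ nz(3) d1 d2 refl refl] nz by simp
      thus ?thesis using 0 by (simp add: G_def S1_def)
    next
      case (Suc j)
      hence jm: "j \<le> m" using k by simp
      define y where "y = q^j"
      have ynz: "y \<noteq> 0" using nz by (simp add: y_def)
      define K where "K = q*(1-w*q*y)*(1-inverse a*q*inverse w*y)/((1-q*y)*(1-e*y)*(1-(-e)*y))"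
      have Ex: "S1 q a w e (x*q) (Suc j) = S1 q a w e x j * (K * ((q - V*y)/(q - V)))"
        unfolding K_def V_def y_def
        apply (rule E2)
        using xnz nz h1[OF jm] h2[OF jm] h3[OF jm] h6 h7[OF jm] h7[of 0] by auto
      have E3': "P (q*y) = K * (-(q^2*V*(1-q*y)*(1-q^3*inverse a*y^2))/(((V-q)*(V-q^3*inverse a))*(q^2*y)))"
        unfolding P_def K_def
        apply (rule E3_core[OF nz(1) ynz nz(3) d1 d2 _ _ _ refl refl refl refl refl ee])
        using h1[OF jm] h2[OF jm] h3[OF jm] by (auto simp: y_def)
      have Gs: "G (Suc k) = S1 q a w e x (Suc j) * P (q*q*y)" "G k = S1 q a w e x j * P (q*y)"
        using Suc by (simp_all add: G_def y_def mult.assoc)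
      show ?thesis
      proof (cases "j = m")
        case True
        have yx: "y = x" using True x y_def by simp
        have R: "(q-V*y)/(q-V) = - (-(q^2*V*(1-q*y)*(1-q^3*inverse a*y^2))/(((V-q)*(V-q^3*inverse a))*(q^2*y)))"
          unfolding yx
          apply (rule R1top[OF nz(1) xnz _ d1 d2 d4 refl refl refl])
          using nz xnz by (auto simp: V_def)
        have top0: "S1 q a w e x (Suc j) = 0" using top True by simp
        have "S1 q a w e (x*q) (Suc j) - c * S1 q a w e x (Suc j)
            = S1 q a w e x (Suc j) * P (q*q*y) - S1 q a w e x j * P (q*y)"
          unfolding Ex E3' top0 R by simp
        thus ?thesis using Suc Gs by simp
      next
        case False
        hence jm': "j < m" using jm by simp
        have d3: "1 - V*y \<noteq> 0" using h4[OF jm'] by (simp add: V_def y_def)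
        have Ey: "S1 q a w e x (Suc j) = S1 q a w e x j * (K * ((1 - V*y^2)/(1 - V*y)))"
          unfolding K_def V_def y_def
          apply (rule E1)
          using xnz h1[OF jm] h2[OF jm] h3[OF jm] h4[OF jm'] by auto
        have R: "(q-V*y)/(q-V) - c * ((1-V*y^2)/(1-V*y))
           = ((1-V*y^2)/(1-V*y)) * P (q*q*y) - (-(q^2*V*(1-q*y)*(1-q^3*inverse a*y^2))/(((V-q)*(V-q^3*inverse a))*(q^2*y)))"
          unfolding c_def P_def
          apply (rule R1gen[OF nz(1) Vnz ynz _ nz(3) d1 d2 d3 d4 refl refl refl refl])
          using nz by simp
        have "S1 q a w e (x*q) (Suc j) - c * S1 q a w e x (Suc j)
            = S1 q a w e x (Suc j) * P (q*q*y) - S1 q a w e x j * P (q*y)"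
          unfolding Ex Ey E3'
        proof -
          let ?t = "S1 q a w e x j"
          have "?t * (K * ((q - V*y)/(q - V))) - c * (?t * (K * ((1 - V*y^2)/(1 - V*y))))
             = ?t * K * ((q - V*y)/(q - V) - c * ((1 - V*y^2)/(1 - V*y)))" by (simp add: algebra_simps)
          also have "\<dots> = ?t * K * (((1-V*y^2)/(1-V*y)) * P (q*q*y) - (-(q^2*V*(1-q*y)*(1-q^3*inverse a*y^2))/(((V-q)*(V-q^3*inverse a))*(q^2*y))))"
            unfolding R ..
          finally show "?t * (K * ((q - V*y)/(q - V))) - c * (?t * (K * ((1 - V*y^2)/(1 - V*y))))
            = ?t * (K * ((1 - V*y^2)/(1 - V*y))) * P (q*q*y) - ?t * (K * (-(q^2*V*(1-q*y)*(1-q^3*inverse a*y^2))/(((V-q)*(V-q^3*inverse a))*(q^2*y))))"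
            by (simp add: algebra_simps)
        qed
        thus ?thesis using Suc Gs by simp
      qed
    qed
  qed
  thus ?thesis by (simp add: c_def V_def)
qed

definition S2 :: "complex \<Rightarrow> complex \<Rightarrow> complex \<Rightarrow> complex \<Rightarrow> complex \<Rightarrow> complex \<Rightarrow> nat \<Rightarrow> complex" where
  "S2 q a w r s x k = qpoch (inverse x) q k * qpoch (x*q) q k * qpoch (s * inverse (x*r)) q k
     * qpoch (- s * inverse (x*r)) q k
     / (qpoch q q k * qpoch (- q) q k * qpoch (inverse w * inverse x) q k * qpoch (a*w*inverse x) q k) * q^k"

lemma E1b_core:
  fixes q x y a w a1 a2 a3 a4 b1 b2 b3 b4 e1 e2 :: complex
  assumes nz: "q\<noteq>0" "x\<noteq>0" "w\<noteq>0" "b1\<noteq>0" "b2\<noteq>0" "b3\<noteq>0" "b4\<noteq>0" "e1\<noteq>0" "e2\<noteq>0"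
    and rel: "a1*x = x-y" "a2 = 1-x*q*y" "a3*a4*(x^2*q) = x^2*q-a*y^2" "b3*(w*x) = e1" "b4*x = e2"
      "e1 = w*x-y" "e2 = x-a*w*y"
  shows "a1*a2*a3*a4*q/(b1*b2*b3*b4) = q*(1-x*q*y)/(b1*b2) * (w*(x-y)*(x^2*q-a*y^2)/(x*q*(e1*e2)))"
  using nz
  apply (simp add: field_simps)
  apply (thin_tac "_ \<noteq> _")+
  using rel
  apply algebra
  done

lemma E1b:
  assumes nz: "q\<noteq>0" "x\<noteq>0" "w\<noteq>0" "r\<noteq>0" and sr: "s^2 = a" "r^2 = q"
    and h: "1 - q*q^j \<noteq> 0" "1 - -q*q^j \<noteq> 0" "1 - inverse w*inverse x*q^j \<noteq> 0" "1 - a*w*inverse x*q^j \<noteq> 0"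
  shows "S2 q a w r s x (Suc j) = S2 q a w r s x j *
    (q*(1-x*q*q^j)/((1-q*q^j)*(1 - -q*q^j)) * (w*(x-q^j)*(x^2*q-a*(q^j)^2)/(x*q*((w*x-q^j)*(x-a*w*q^j)))))"
proof -
  let ?y = "q^j"
  have e1: "(1 - inverse w*inverse x*?y)*(w*x) = w*x-?y" using nz by (simp add: field_simps)
  have e2: "(1 - a*w*inverse x*?y)*x = x-a*w*?y" using nz by (simp add: field_simps)
  have "w*x-?y \<noteq> 0" using e1 h(3) nz by (metis mult_eq_0_iff)
  moreover have "x-a*w*?y \<noteq> 0" using e2 h(4) nz by (metis mult_eq_0_iff)
  moreover have "(1 - inverse x*?y)*x = x-?y" using nz by (simp add: field_simps)
  moreover have "(1 - s*inverse(x*r)*?y)*(1 - - s*inverse(x*r)*?y)*(x^2*q) = x^2*q-a*?y^2"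
  proof -
    have "(1 - s*inverse(x*r)*?y)*(1 - - s*inverse(x*r)*?y) = 1 - s^2*?y^2/(x^2*r^2)"
      using nz by (simp add: field_simps power2_eq_square)
    thus ?thesis using nz sr by (simp add: field_simps)
  qed
  ultimately show ?thesis
    unfolding S2_def qpoch_Suc power_Suc rearr
    apply (subst E1b_core[OF nz(1-3) h(1-4)])
    using e1 e2 by auto
qed

lemma S2_top:
  assumes "x = q^m" "q \<noteq> 0"
  shows "S2 q a w r s x (Suc m) = 0"
  using assms unfolding S2_def by (simp add: qpoch_Suc)

lemma E2b_core:
  fixes q x y a w a1 a2 a3 a4 b1 b2 b3 b4 f1 f2 h :: complex
  assumes nz: "q\<noteq>0" "x\<noteq>0" "w\<noteq>0" "b1\<noteq>0" "b2\<noteq>0" "b3\<noteq>0" "b4\<noteq>0" "f1\<noteq>0" "f2\<noteq>0" "h\<noteq>0"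
    and rel: "a1*(x*q) = x*q-1" "a2*h = (1-x*q*y)*(1-x*q*q*y)" "h = 1-x*q" "a3*a4*(x^2*q^3) = x^2*q^3-a"
      "b3*(w*x*q) = f1" "b4*(x*q) = f2" "f1 = w*x*q-1" "f2 = x*q-a*w"
  shows "a1*a2*a3*a4*q/(b1*b2*b3*b4) = q*(1-x*q*y)/(b1*b2) * (-((1-x*q^2*y)*(x^2*q^3-a)*w)/(x*q^2*(f1*f2)))"
  using nz
  apply (simp add: field_simps)
  apply (thin_tac "_ \<noteq> _")+
  using rel
  apply algebra
  done

lemma E2b:
  assumes nz: "q\<noteq>0" "x\<noteq>0" "w\<noteq>0" "r\<noteq>0" and sr: "s^2 = a" "r^2 = q"
    and h: "1 - q*q^j \<noteq> 0" "1 - -q*q^j \<noteq> 0" "1 - inverse w*inverse(x*q) \<noteq> 0" "1 - a*w*inverse(x*q) \<noteq> 0"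
      "1 - x*q \<noteq> 0"
  shows "S2 q a w r s (x*q) (Suc j) = S2 q a w r s x j *
    (q*(1-x*q*q^j)/((1-q*q^j)*(1 - -q*q^j)) * (-((1-x*q^2*q^j)*(x^2*q^3-a)*w)/(x*q^2*((w*x*q-1)*(x*q-a*w)))))"
proof -
  let ?y = "q^j"
  have r1: "qpoch (inverse (x*q)) q (Suc j) = qpoch (inverse x) q j * (1 - inverse(x*q))"
    unfolding qpoch_Suc' using nz by (simp add: field_simps)
  have r2: "qpoch (x*q*q) q (Suc j) = qpoch (x*q) q j * ((1-x*q*?y)*(1-x*q*q*?y)/(1-x*q))"
  proof -
    have "qpoch (x*q) q (Suc (Suc j)) = (1-x*q) * qpoch (x*q*q) q (Suc j)" by (rule qpoch_Suc')
    moreover have "qpoch (x*q) q (Suc (Suc j)) = qpoch (x*q) q j * (1-x*q*?y)*(1-x*q*q*?y)"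
      by (simp add: qpoch_Suc mult.assoc mult.left_commute)
    ultimately have eq: "(1-x*q) * qpoch (x*q*q) q (Suc j) = qpoch (x*q) q j * ((1-x*q*?y)*(1-x*q*q*?y))"
      by (simp add: mult.assoc)
    have "qpoch (x*q*q) q (Suc j) = qpoch (x*q) q j * ((1-x*q*?y)*(1-x*q*q*?y)) / (1-x*q)"
      using h(5) eq by (metis nonzero_mult_div_cancel_left)
    thus ?thesis by (simp only: times_divide_eq_right)
  qed
  have r3: "qpoch (s * inverse (x*q*r)) q (Suc j) = qpoch (s * inverse (x*r)) q j * (1 - s * inverse (x*q*r))"
    unfolding qpoch_Suc' using nz by (simp add: field_simps)
  have r4: "qpoch (- s * inverse (x*q*r)) q (Suc j) = qpoch (- s * inverse (x*r)) q j * (1 - - s * inverse (x*q*r))"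
    unfolding qpoch_Suc' using nz by (simp add: field_simps)
  have r5: "qpoch (inverse w * inverse (x*q)) q (Suc j) = qpoch (inverse w * inverse x) q j * (1 - inverse w * inverse (x*q))"
    unfolding qpoch_Suc' using nz by (simp add: field_simps)
  have r6: "qpoch (a*w*inverse (x*q)) q (Suc j) = qpoch (a*w*inverse x) q j * (1 - a*w*inverse (x*q))"
    unfolding qpoch_Suc' using nz by (simp add: field_simps)
  have f1: "(1 - inverse w*inverse(x*q))*(w*x*q) = w*x*q-1" using nz by (simp add: field_simps)
  have f2: "(1 - a*w*inverse(x*q))*(x*q) = x*q-a*w" using nz by (simp add: field_simps)
  have "w*x*q-1 \<noteq> 0" using f1 h(3) nz by (metis mult_eq_0_iff)
  moreover have "x*q-a*w \<noteq> 0" using f2 h(4) nz by (metis mult_eq_0_iff)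
  moreover have "(1 - inverse(x*q))*(x*q) = x*q-1" using nz by (simp add: field_simps)
  moreover have "((1-x*q*?y)*(1-x*q*q*?y)/(1-x*q))*(1-x*q) = (1-x*q*?y)*(1-x*q*q*?y)" using h(5) by simp
  moreover have "(1 - s*inverse(x*q*r))*(1 - - s*inverse(x*q*r))*(x^2*q^3) = x^2*q^3-a"
  proof -
    have "(1 - s*inverse(x*q*r))*(1 - - s*inverse(x*q*r)) = 1 - s^2/(x^2*q^2*r^2)"
      using nz by (simp add: field_simps power2_eq_square)
    thus ?thesis using nz sr by (simp add: field_simps power2_eq_square power3_eq_cube)
  qed
  ultimately show ?thesis
    unfolding S2_def unfolding r1 r2 r3 r4 r5 r6 unfolding qpoch_Suc power_Suc rearr
    apply (subst E2b_core[OF nz(1-3) h(1-4) _ _ h(5)])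
    using f1 f2 by auto
qed

lemma E3b_core:
  fixes q x y a w b1 b2 h1 f2 :: complex
  assumes nz: "q\<noteq>0" "x\<noteq>0" "y\<noteq>0" "w\<noteq>0" "b1\<noteq>0" "b2\<noteq>0" "h1\<noteq>0" "f2\<noteq>0"
    and dd: "b1 = 1-q*y" "b2 = 1 - -q*y"
  shows "-(w*(1-x*(q*y))*(x^3*q^4-a*(q*y)))/(x*q*(h1*f2)*(q*y))
    = q*(1-x*q*y)/(b1*b2) * (-(w*(x^3*q^3-a*y)*(1-q^2*y^2))/(x*q^2*(h1*f2)*y))"
  using nz
  apply (simp add: field_simps)
  apply (unfold dd)
  apply (thin_tac "_ \<noteq> _")+
  apply algebra
  done

lemma step2:
  fixes q a w r s x :: complex and m :: nat
  assumes x: "x = q^m" and nz: "q \<noteq> 0" "a \<noteq> 0" "w \<noteq> 0" "r \<noteq> 0"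
    and sr: "s^2 = a" "r^2 = q"
    and g1: "\<And>j. j \<le> m \<Longrightarrow> 1 - q*q^j \<noteq> 0"
    and g2: "\<And>j. j \<le> m \<Longrightarrow> 1 - -q*q^j \<noteq> 0"
    and g3: "\<And>j. j < m \<Longrightarrow> 1 - inverse w*inverse x*q^j \<noteq> 0"
    and g4: "\<And>j. j < m \<Longrightarrow> 1 - a*w*inverse x*q^j \<noteq> 0"
    and g5: "1 - x*q \<noteq> 0" and g6: "1 - inverse w*inverse(x*q) \<noteq> 0"
    and g7: "1 - a*w*inverse(x*q) \<noteq> 0" and g8: "1 - w*q*x \<noteq> 0"
  shows "(\<Sum>k\<le>Suc m. S2 q a w r s (x*q) k) =
     (1-w*q^2*x^2)*(x^2*q^2-a*w)/(x*q*((1-w*q*x)*(x*q-a*w))) * (\<Sum>k\<le>m. S2 q a w r s x k)"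
proof -
  define c where "c = (1-w*q^2*x^2)*(x^2*q^2-a*w)/(x*q*((1-w*q*x)*(x*q-a*w)))"
  define P where "P z = -(w*(1-x*z)*(x^3*q^4-a*z))/(x*q*((1-w*q*x)*(x*q-a*w))*z)" for z
  define G where "G k = (if k = 0 then 0 else S2 q a w r s x (k-1) * P (q^k))" for k
  have xnz: "x \<noteq> 0" using x nz by simp
  have f1: "w*x*q-1 \<noteq> 0"
  proof -
    have "(1 - inverse w*inverse(x*q))*(w*x*q) = w*x*q-1" using nz xnz by (simp add: field_simps)
    thus ?thesis using g6 nz xnz by (metis mult_eq_0_iff)
  qed
  have f2: "x*q-a*w \<noteq> 0"
  proof -
    have "(1 - a*w*inverse(x*q))*(x*q) = x*q-a*w" using nz xnz by (simp add: field_simps)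
    thus ?thesis using g7 nz xnz by (metis mult_eq_0_iff)
  qed
  have top: "S2 q a w r s x (Suc m) = 0" by (rule S2_top[OF x nz(1)])
  have "(\<Sum>k\<le>Suc m. S2 q a w r s (x*q) k) = c * (\<Sum>k\<le>m. S2 q a w r s x k)"
  proof (rule wz_telescope[where G = G])
    show "G 0 = 0" by (simp add: G_def)
    show "G (Suc (Suc m)) = 0" by (simp add: G_def top)
    show "S2 q a w r s x (Suc m) = 0" by (rule top)
    fix k assume k: "k \<le> Suc m"
    show "S2 q a w r s (x*q) k - c * S2 q a w r s x k = G (Suc k) - G k"
    proof (cases k)
      case 0
      have "1 - c = P q"
        unfolding c_def P_def
        using R2zero[OF nz(1) xnz nz(2,3) f2 g8 refl refl] by simp
      thus ?thesis using 0 by (simp add: G_def S2_def)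
    next
      case (Suc j)
      hence jm: "j \<le> m" using k by simp
      define y where "y = q^j"
      have ynz: "y \<noteq> 0" using nz by (simp add: y_def)
      define K where "K = q*(1-x*q*y)/((1-q*y)*(1 - -q*y))"
      have Ex: "S2 q a w r s (x*q) (Suc j) = S2 q a w r s x j * (K * (-((1-x*q^2*y)*(x^2*q^3-a)*w)/(x*q^2*((w*x*q-1)*(x*q-a*w)))))"
        unfolding K_def y_def
        by (rule E2b[OF nz(1) xnz nz(3,4) sr g1[OF jm] g2[OF jm] g6 g7 g5])
      have E3': "P (q*y) = K * (-(w*(x^3*q^3-a*y)*(1-q^2*y^2))/(x*q^2*((1-w*q*x)*(x*q-a*w))*y))"
        unfolding P_def K_def
        apply (rule E3b_core[OF nz(1) xnz ynz nz(3) _ _ g8 f2 refl refl])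
        using g1[OF jm] g2[OF jm] by (auto simp: y_def)
      have Gs: "G (Suc k) = S2 q a w r s x (Suc j) * P (q*q*y)" "G k = S2 q a w r s x j * P (q*y)"
        using Suc by (simp_all add: G_def y_def mult.assoc)
      show ?thesis
      proof (cases "j = m")
        case True
        have yx: "y = x" using True x y_def by simp
        have R: "-((1-x*q^2*y)*(x^2*q^3-a)*w)/(x*q^2*((w*x*q-1)*(x*q-a*w)))
            = - (-(w*(x^3*q^3-a*y)*(1-q^2*y^2))/(x*q^2*((1-w*q*x)*(x*q-a*w))*y))"
          unfolding yx
          by (rule R2top[OF nz(1) xnz nz(2,3) f1 f2 g8 refl refl refl])
        have top0: "S2 q a w r s x (Suc j) = 0" using top True by simp
        have "S2 q a w r s (x*q) (Suc j) - c * S2 q a w r s x (Suc j)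
            = S2 q a w r s x (Suc j) * P (q*q*y) - S2 q a w r s x j * P (q*y)"
          unfolding Ex E3' top0 R by simp
        thus ?thesis using Suc Gs by simp
      next
        case False
        hence jm': "j < m" using jm by simp
        have e1: "w*x-y \<noteq> 0"
        proof -
          have "(1 - inverse w*inverse x*y)*(w*x) = w*x-y" using nz xnz by (simp add: field_simps)
          thus ?thesis using g3[OF jm'] nz xnz by (metis mult_eq_0_iff y_def)
        qed
        have e2: "x-a*w*y \<noteq> 0"
        proof -
          have "(1 - a*w*inverse x*y)*x = x-a*w*y" using nz xnz by (simp add: field_simps)
          thus ?thesis using g4[OF jm'] nz xnz by (metis mult_eq_0_iff y_def)
        qed
        have Ey: "S2 q a w r s x (Suc j) = S2 q a w r s x j * (K * (w*(x-y)*(x^2*q-a*y^2)/(x*q*((w*x-y)*(x-a*w*y)))))"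
          unfolding K_def y_def
          by (rule E1b[OF nz(1) xnz nz(3,4) sr g1[OF jm] g2[OF jm] g3[OF jm'] g4[OF jm']])
        have R: "-((1-x*q^2*y)*(x^2*q^3-a)*w)/(x*q^2*((w*x*q-1)*(x*q-a*w))) - c * (w*(x-y)*(x^2*q-a*y^2)/(x*q*((w*x-y)*(x-a*w*y))))
           = (w*(x-y)*(x^2*q-a*y^2)/(x*q*((w*x-y)*(x-a*w*y)))) * P (q*q*y) - (-(w*(x^3*q^3-a*y)*(1-q^2*y^2))/(x*q^2*((1-w*q*x)*(x*q-a*w))*y))"
          unfolding c_def P_def
          by (rule R2gen[OF nz(1) xnz ynz nz(2,3) e1 e2 f1 f2 g8 refl refl refl refl refl])
        have "S2 q a w r s (x*q) (Suc j) - c * S2 q a w r s x (Suc j)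
            = S2 q a w r s x (Suc j) * P (q*q*y) - S2 q a w r s x j * P (q*y)"
          unfolding Ex Ey E3'
        proof -
          let ?t = "S2 q a w r s x j"
          let ?A = "-((1-x*q^2*y)*(x^2*q^3-a)*w)/(x*q^2*((w*x*q-1)*(x*q-a*w)))"
          let ?B = "w*(x-y)*(x^2*q-a*y^2)/(x*q*((w*x-y)*(x-a*w*y)))"
          let ?C = "-(w*(x^3*q^3-a*y)*(1-q^2*y^2))/(x*q^2*((1-w*q*x)*(x*q-a*w))*y)"
          have "?t * (K * ?A) - c * (?t * (K * ?B)) = ?t * K * (?A - c * ?B)" by (simp add: algebra_simps)
          also have "\<dots> = ?t * K * (?B * P (q*q*y) - ?C)" unfolding R ..
          finally show "?t * (K * ?A) - c * (?t * (K * ?B)) = ?t * (K * ?B) * P (q*q*y) - ?t * (K * ?C)"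
            by (simp add: algebra_simps)
        qed
        thus ?thesis using Suc Gs by simp
      qed
    qed
  qed
  thus ?thesis by (simp add: c_def)
qed

definition L1 :: "complex \<Rightarrow> complex \<Rightarrow> complex \<Rightarrow> nat \<Rightarrow> complex" where
  "L1 q a w n = qpoch (w * q^2) (q^2) n * qpoch (inverse a * q^2 * inverse w) (q^2) n
       / (qpoch q (q^2) n * qpoch (inverse a * q^3) (q^2) n)"

definition L2 :: "complex \<Rightarrow> complex \<Rightarrow> complex \<Rightarrow> nat \<Rightarrow> complex" where
  "L2 q a w n = qpoch (w * q^2) (q^2) n * qpoch (a * w * inverse (q^(2*n))) (q^2) n
       / (qpoch (w * q) q n * qpoch (a * w * inverse (q^n)) q n)"

lemma rearr2: "((A::complex)*a1)*(B*a2)/((C*b1)*(D*b2)) = (a1*a2/(b1*b2)) * (A*B/(C*D))"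
  by (simp add: divide_inverse inverse_mult_distrib mult_ac)

lemma c1_core:
  fixes q X a w u1 u2 :: complex
  assumes nz: "q\<noteq>0" "X\<noteq>0" "a\<noteq>0" "w\<noteq>0" "u1\<noteq>0" "u2\<noteq>0" "v1\<noteq>0" "v2\<noteq>0"
    and dd: "u1 = 1 - q*X" "u2 = 1 - inverse a*q^3*X" "v1 * X = u1" "v2 * X * a = u2 * a"
  shows "(1 - w*q^2*X)*(1 - inverse a*q^2*inverse w*X)/(u1*u2) = (inverse X - w*q^2)*(w*inverse X - q^2*inverse a)/(w*(v1*v2))"
proof -
  have v1: "v1 = u1 / X" using dd nz by (simp add: field_simps)
  have v2: "v2 = u2 / X" using dd nz by (simp add: field_simps)
  show ?thesis unfolding v1 v2 using nz by (simp add: field_simps)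
qed

lemma L1_Suc:
  assumes nz: "q\<noteq>0" "a\<noteq>0" "w\<noteq>0" and u: "1 - q*(q^2)^m \<noteq> 0" "1 - inverse a*q^3*(q^2)^m \<noteq> 0"
  shows "L1 q a w (Suc m) = (inverse((q^m)^2)-w*q^2)*(w*inverse((q^m)^2)-q^2*inverse a)/(w*((inverse((q^m)^2)-q)*(inverse((q^m)^2)-q^3*inverse a))) * L1 q a w m"
proof -
  have X: "(q^2)^m = (q^m)^2" by (simp add: power_mult[symmetric] mult.commute)
  have Xnz: "(q^m)^2 \<noteq> 0" using nz by simp
  have v1: "(inverse((q^m)^2)-q) * (q^m)^2 = 1 - q*(q^m)^2" using Xnz by (simp add: field_simps)
  have v2: "(inverse((q^m)^2)-q^3*inverse a) * (q^m)^2 * a = (1 - inverse a*q^3*(q^m)^2) * a"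
    using Xnz nz by (simp add: field_simps)
  have "inverse((q^m)^2)-q \<noteq> 0" using v1 u(1) X by auto
  moreover have "inverse((q^m)^2)-q^3*inverse a \<noteq> 0" using v2 u(2) X nz by auto
  ultimately show ?thesis
    unfolding L1_def qpoch_Suc rearr2 X
    using c1_core[OF nz(1) Xnz nz(2,3) u[unfolded X] _ _ refl refl v1 v2] by simp
qed

lemma c2_core:
  fixes q x a w u1 u2 :: complex
  assumes nz: "q\<noteq>0" "x\<noteq>0" "a\<noteq>0" "w\<noteq>0" "u1\<noteq>0" "u2\<noteq>0"
    and dd: "u1 = 1 - w*q*x" "u2 * (x*q) = x*q - a*w"
  shows "(1 - w*q^2*x^2)*(1 - a*w*inverse((x*q)^2))/(u1*u2) = (1-w*q^2*x^2)*(x^2*q^2-a*w)/(x*q*(u1*(x*q-a*w)))"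
proof -
  have u2: "u2 = (x*q - a*w)/(x*q)" using dd nz by (simp add: field_simps)
  have "x*q - a*w \<noteq> 0" using u2 nz by auto
  thus ?thesis unfolding u2 using nz by (simp add: field_simps power2_eq_square)
qed

lemma L2_Suc:
  assumes nz: "q\<noteq>0" "a\<noteq>0" "w\<noteq>0" and u: "1 - w*q*q^m \<noteq> 0" "1 - a*w*inverse(q^(Suc m)) \<noteq> 0"
  shows "L2 q a w (Suc m) = (1-w*q^2*(q^m)^2)*((q^m)^2*q^2-a*w)/(q^m*q*((1-w*q*q^m)*(q^m*q-a*w))) * L2 q a w m"
proof -
  have X: "(q^2)^m = (q^m)^2" by (simp add: power_mult[symmetric] mult.commute)
  have uu: "a*w*inverse(q^(2*Suc m))*q^2 = a*w*inverse(q^(2*m))"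
  proof -
    have "q^(2*Suc m) = q^(2*m)*q^2" by (simp add: power_add[symmetric])
    thus ?thesis using nz by (simp add: field_simps)
  qed
  have u2: "(q^m*q)^2 = q^(2*Suc m)"
  proof -
    have "q^(2*Suc m) = (q^(Suc m))^2" by (metis power_mult mult.commute)
    thus ?thesis by (simp only: power_Suc2)
  qed
  have r1: "qpoch (a * w * inverse (q^(2*Suc m))) (q^2) (Suc m) = qpoch (a * w * inverse (q^(2*m))) (q^2) m * (1 - a*w*inverse((q^m*q)^2))"
    unfolding qpoch_Suc' uu u2 by (simp add: mult.commute)
  have r2: "qpoch (a * w * inverse (q^(Suc m))) q (Suc m) = qpoch (a * w * inverse (q^m)) q m * (1 - a*w*inverse(q^(Suc m)))"
    unfolding qpoch_Suc' using nz by (simp add: field_simps)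
  have e: "(1 - a*w*inverse(q^(Suc m))) * (q^m*q) = q^m*q - a*w" using nz by (simp add: field_simps)
  show ?thesis
    unfolding L2_def r1 r2 unfolding qpoch_Suc rearr2 X
    using c2_core[OF nz(1) _ nz(2,3) u refl e] nz by (simp add: mult.commute)
qed

lemma ipow: "(q::complex) \<noteq> 0 \<Longrightarrow> j \<le> M \<Longrightarrow> inverse(q^M)*q^j = inverse(q^(M-j))"
proof -
  assume q: "q \<noteq> 0" and j: "j \<le> M"
  obtain d where M: "M = j + d" using j le_Suc_ex by blast
  show ?thesis using q unfolding M by (simp add: power_add field_simps)
qed

lemma nzQ: "(q::complex) \<noteq> 0 \<Longrightarrow> j \<le> M \<Longrightarrow> q^(M-j) \<noteq> 1 \<Longrightarrow> 1 - inverse(q^M)*q^j \<noteq> 0"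
  by (simp add: ipow)

lemma sqpow: "((q::complex)^m)^2 = q^(2*m)" by (metis power_mult mult.commute)

theorem mainTheorem2:
  fixes n :: nat and q a w r s :: complex
  assumes r_sq: "r ^ 2 = q"
    and s_sq: "s ^ 2 = a"
    and q_nz: "q \<noteq> 0" and a_nz: "a \<noteq> 0" and w_nz: "w \<noteq> 0"
    and d1: "qpoch q (q^2) n \<noteq> 0"
    and d2: "qpoch (inverse a * q^3) (q^2) n \<noteq> 0"
    and d3: "qpoch q q n \<noteq> 0"
    and d4: "qpoch (inverse (q ^ (2*n))) q n \<noteq> 0"
    and d5: "qpoch (inverse s * r^3) q n \<noteq> 0"
    and d6: "qpoch (- inverse s * r^3) q n \<noteq> 0"
    and d7: "qpoch (w * q) q n \<noteq> 0"
    and d8: "qpoch (a * w * inverse (q ^ n)) q n \<noteq> 0"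
    and d9: "qpoch (- q) q n \<noteq> 0"
    and d10: "qpoch (inverse w * inverse (q ^ n)) q n \<noteq> 0"
  shows
    "qpoch (w * q^2) (q^2) n * qpoch (inverse a * q^2 * inverse w) (q^2) n
       / (qpoch q (q^2) n * qpoch (inverse a * q^3) (q^2) n)
     = (\<Sum>k\<le>n.
         qpoch (inverse (q^n)) q k * qpoch (- inverse (q^n)) q k
           * qpoch (w * q) q k * qpoch (inverse a * q * inverse w) q k
         / (qpoch q q k * qpoch (inverse (q^(2*n))) q k
            * qpoch (inverse s * r^3) q k * qpoch (- inverse s * r^3) q k)
         * q ^ k)
     \<and>
     qpoch (w * q^2) (q^2) n * qpoch (a * w * inverse (q^(2*n))) (q^2) n
       / (qpoch (w * q) q n * qpoch (a * w * inverse (q^n)) q n)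
     = (\<Sum>k\<le>n.
         qpoch (inverse (q^n)) q k * qpoch (q^(n+1)) q k
           * qpoch (s * inverse (q^n * r)) q k * qpoch (- s * inverse (q^n * r)) q k
         / (qpoch q q k * qpoch (- q) q k
            * qpoch (inverse w * inverse (q^n)) q k * qpoch (a * w * inverse (q^n)) q k)
         * q ^ k)"
proof -
  have r_nz: "r \<noteq> 0" using r_sq q_nz by auto
  have Q: "\<And>i. 1 \<le> i \<Longrightarrow> i \<le> 2*n \<Longrightarrow> q^i \<noteq> 1"
  proof -
    fix i :: nat assume i: "1 \<le> i" "i \<le> 2*n"
    show "q^i \<noteq> 1"
    proof (cases "i \<le> n")
      case True
      have "1 - q*q^(i-1) \<noteq> 0" using qpoch_nz_factor[OF d3, of "i-1"] True i by simp
      moreover have "q*q^(i-1) = q^i" using i by (cases i) auto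
      ultimately show ?thesis by simp
    next
      case False
      have "1 - inverse(q^(2*n))*q^(2*n-i) \<noteq> 0" using qpoch_nz_factor[OF d4, of "2*n-i"] False i by simp
      moreover have "inverse(q^(2*n))*q^(2*n-i) = inverse(q^i)" using q_nz i by (simp add: ipow)
      ultimately show ?thesis by auto
    qed
  qed
  define e where "e = inverse s * r^3"
  have ee: "e^2 = q^3 * inverse a"
  proof -
    have "e^2 = inverse (s^2) * (r^2)^3" unfolding e_def by (simp add: power_mult_distrib power_inverse power_mult[symmetric] mult.commute)
    thus ?thesis using r_sq s_sq by (simp add: mult.commute)
  qed
  have P1: "m \<le> n \<Longrightarrow> L1 q a w m = (\<Sum>k\<le>m. S1 q a w e (q^m) k)" for m
  proof (induction m)
    case 0
    show ?case by (simp add: L1_def S1_def)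
  next
    case (Suc m)
    hence mn: "m < n" by simp
    have IH: "L1 q a w m = (\<Sum>k\<le>m. S1 q a w e (q^m) k)" using Suc by simp
    have X: "(q^2)^m = (q^m)^2" by (simp add: power_mult[symmetric] mult.commute)
    have u1: "1 - q*(q^2)^m \<noteq> 0" using qpoch_nz_factor[OF d1 mn] .
    have u2: "1 - inverse a*q^3*(q^2)^m \<noteq> 0" using qpoch_nz_factor[OF d2 mn] by simp
    have Xnz: "(q^m)^2 \<noteq> 0" using q_nz by simp
    have h5a: "inverse((q^m)^2) - q \<noteq> 0"
    proof -
      have "(inverse((q^m)^2)-q) * (q^m)^2 = 1 - q*(q^m)^2" using Xnz by (simp add: field_simps)
      thus ?thesis using u1 X by auto
    qed
    have h5b: "inverse((q^m)^2) - q^3*inverse a \<noteq> 0"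
    proof -
      have "(inverse((q^m)^2)-q^3*inverse a) * (q^m)^2 = 1 - inverse a*q^3*(q^m)^2" using Xnz by (simp add: field_simps)
      thus ?thesis using u2 X by auto
    qed
    have sq1: "(q^m*q)^2 = q^(2*Suc m)" by (simp only: power_Suc2[symmetric] sqpow)
    have st: "(\<Sum>k\<le>Suc m. S1 q a w e (q^m*q) k) =
     (inverse((q^m)^2)-w*q^2)*(w*inverse((q^m)^2)-q^2*inverse a)/(w*((inverse((q^m)^2)-q)*(inverse((q^m)^2)-q^3*inverse a)))
     * (\<Sum>k\<le>m. S1 q a w e (q^m) k)"
    proof (rule step1[OF refl q_nz a_nz w_nz ee])
      fix j assume j: "j \<le> m"
      hence jn: "j < n" using mn by simp
      show "1 - q*q^j \<noteq> 0" using qpoch_nz_factor[OF d3 jn] .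
      show "1 - e*q^j \<noteq> 0" using qpoch_nz_factor[OF d5 jn] by (simp add: e_def)
      show "1 - (-e)*q^j \<noteq> 0" using qpoch_nz_factor[OF d6 jn] by (simp add: e_def)
      have "1 - inverse(q^(2*Suc m))*q^(Suc j) \<noteq> 0"
        apply (rule nzQ[OF q_nz])
        using j mn apply simp
        apply (rule Q) using j mn by auto
      thus "1 - inverse((q^m*q)^2)*q*q^j \<noteq> 0" unfolding sq1 by (simp add: mult.assoc)
    next
      fix j assume j: "j < m"
      have "1 - inverse(q^(2*m))*q^j \<noteq> 0"
        apply (rule nzQ[OF q_nz])
        using j mn apply simp
        apply (rule Q) using j mn by auto
      thus "1 - inverse((q^m)^2)*q^j \<noteq> 0" by (simp add: sqpow)
    next
      show "inverse((q^m)^2) - q \<noteq> 0" by (rule h5a)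
      show "inverse((q^m)^2) - q^3*inverse a \<noteq> 0" by (rule h5b)
      have "1 - inverse(q^(2*Suc m))*q^0 \<noteq> 0"
        apply (rule nzQ[OF q_nz])
        using mn apply simp
        apply (rule Q) using mn by auto
      thus "1 - inverse((q^m*q)^2) \<noteq> 0" unfolding sq1 by simp
    qed
    have "L1 q a w (Suc m) = (\<Sum>k\<le>Suc m. S1 q a w e (q^m*q) k)"
      unfolding L1_Suc[OF q_nz a_nz w_nz u1 u2] IH by (rule st[symmetric])
    thus ?case by (simp only: power_Suc2)
  qed
  have P2: "m \<le> n \<Longrightarrow> L2 q a w m = (\<Sum>k\<le>m. S2 q a w r s (q^m) k)" for m
  proof (induction m)
    case 0
    show ?case by (simp add: L2_def S2_def)
  next
    case (Suc m)
    hence mn: "m < n" by simp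
    have IH: "L2 q a w m = (\<Sum>k\<le>m. S2 q a w r s (q^m) k)" using Suc by simp
    have u1: "1 - w*q*q^m \<noteq> 0" using qpoch_nz_factor[OF d7 mn] .
    have iw: "\<And>i. i \<le> n \<Longrightarrow> inverse(q^n)*q^(n-i) = inverse(q^i)" using q_nz by (simp add: ipow)
    have u2: "1 - a*w*inverse(q^(Suc m)) \<noteq> 0"
      using qpoch_nz_factor[OF d8, of "n - Suc m"] mn iw[of "Suc m"] by (simp add: mult.assoc)
    have st: "(\<Sum>k\<le>Suc m. S2 q a w r s (q^m*q) k) =
      (1-w*q^2*(q^m)^2)*((q^m)^2*q^2-a*w)/(q^m*q*((1-w*q*q^m)*(q^m*q-a*w))) * (\<Sum>k\<le>m. S2 q a w r s (q^m) k)"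
    proof (rule step2[OF refl q_nz a_nz w_nz r_nz s_sq r_sq])
      fix j assume j: "j \<le> m"
      hence jn: "j < n" using mn by simp
      show "1 - q*q^j \<noteq> 0" using qpoch_nz_factor[OF d3 jn] .
      show "1 - -q*q^j \<noteq> 0" using qpoch_nz_factor[OF d9 jn] .
    next
      fix j assume j: "j < m"
      have i: "n - m + j < n" using j mn by simp
      have eq: "inverse(q^n)*q^(n-m+j) = inverse(q^m)*q^j"
      proof -
        have "inverse(q^n)*q^(n-m+j) = inverse(q^(m-j))" using iw[of "m-j"] j mn
          by (metis diff_diff_cancel diff_le_self le_trans less_imp_le_nat add_diff_assoc2 Nat.diff_diff_right)
        also have "\<dots> = inverse(q^m)*q^j" using ipow[OF q_nz, of j m] j by simp
        finally show ?thesis .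
      qed
      show "1 - inverse w*inverse (q^m)*q^j \<noteq> 0"
        using qpoch_nz_factor[OF d10 i] eq by (simp add: mult.assoc)
      show "1 - a*w*inverse (q^m)*q^j \<noteq> 0"
        using qpoch_nz_factor[OF d8 i] eq by (simp add: mult.assoc)
    next
      show "1 - q^m*q \<noteq> 0" using qpoch_nz_factor[OF d3 mn] by (simp add: mult.commute)
      have eq: "inverse(q^n)*q^(n - Suc m) = inverse(q^m*q)" using iw[of "Suc m"] mn by (simp add: power_Suc2)
      show "1 - inverse w*inverse (q^m*q) \<noteq> 0"
        using qpoch_nz_factor[OF d10, of "n - Suc m"] mn eq by (simp add: mult.assoc)
      show "1 - a*w*inverse (q^m*q) \<noteq> 0"
        using qpoch_nz_factor[OF d8, of "n - Suc m"] mn eq by (simp add: mult.assoc)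
      show "1 - w*q*q^m \<noteq> 0" by (rule u1)
    qed
    have "L2 q a w (Suc m) = (\<Sum>k\<le>Suc m. S2 q a w r s (q^m*q) k)"
      unfolding L2_Suc[OF q_nz a_nz w_nz u1 u2] IH by (rule st[symmetric])
    thus ?case by (simp only: power_Suc2)
  qed
  have A: "qpoch (w * q^2) (q^2) n * qpoch (inverse a * q^2 * inverse w) (q^2) n
       / (qpoch q (q^2) n * qpoch (inverse a * q^3) (q^2) n)
     = (\<Sum>k\<le>n.
         qpoch (inverse (q^n)) q k * qpoch (- inverse (q^n)) q k
           * qpoch (w * q) q k * qpoch (inverse a * q * inverse w) q k
         / (qpoch q q k * qpoch (inverse (q^(2*n))) q k
            * qpoch (inverse s * r^3) q k * qpoch (- inverse s * r^3) q k)
         * q ^ k)"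
    using P1[OF order_refl] unfolding L1_def S1_def e_def by (simp add: sqpow)
  have B: "qpoch (w * q^2) (q^2) n * qpoch (a * w * inverse (q^(2*n))) (q^2) n
       / (qpoch (w * q) q n * qpoch (a * w * inverse (q^n)) q n)
     = (\<Sum>k\<le>n.
         qpoch (inverse (q^n)) q k * qpoch (q^(n+1)) q k
           * qpoch (s * inverse (q^n * r)) q k * qpoch (- s * inverse (q^n * r)) q k
         / (qpoch q q k * qpoch (- q) q k
            * qpoch (inverse w * inverse (q^n)) q k * qpoch (a * w * inverse (q^n)) q k)
         * q ^ k)"
  proof -
    have pn: "q^(n+1) = q^n*q" by (simp only: Suc_eq_plus1[symmetric] power_Suc2)
    show ?thesis unfolding pn using P2[OF order_refl] unfolding L2_def S2_def .
  qed
  show ?thesis using A B by simp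
qed

end
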